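(* Let $L$ be an even hyperbolic lattice and $M$ an even negative definite lattice, and view $\mathbb H_L$ as the subset of $\mathbb H_{L\oplus M}$ consisting of vectors with zero projection onto $M\otimes\mathbb R$. Then there are chambers $\mathcal D_L$ of $L$ and $\mathcal D_{L\oplus M}$ of $L\oplus M$ such that $\overline{\mathcal D_L}=\overline{\mathcal D_{L\oplus M}}\cap\mathbb H_L$ (closures taken in $\mathbb H_L$, resp. $\mathbb H_{L\oplus M}$).
   Context: All lattices are even: a lattice is a free $\mathbb Z$-module $L$ of finite rank with a non-degenerate symmetric bilinear form $(x.y)\in\mathbb Z$ such that $x^2:=(x.x)$ is even for all $x$. $L$ is hyperbolic if its signature is $(1,\mathrm{rk}L-1)$. A root is a vector $r\in L$ with $r^2=-2$. For hyperbolic $L$, fix a connected component $\mathcal P_L$ of $\{x\in L\otimes\mathbb R: x^2>0\}$ and let $\mathbb H_L=\{x\in\mathcal P_L: x^2=1\}$ (for $L\oplus M$ take the component containing $\mathcal P_L$). The chambers are the connected components of $\mathbb H_L\setminus\bigcup_r r^\perp$ (union over all roots $r$ of $L$). *)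

theory Defs
  imports "HOL-Analysis.Analysis"
begin

text \<open>A lattice of rank n is given by its Gram matrix G (integer n x n matrix) w.r.t. a
  Z-basis; L is identified with the integer vectors of real^'n, and L \<otimes> R with real^'n.\<close>

definition bil :: "int^'n^'n \<Rightarrow> real^'n \<Rightarrow> real^'n \<Rightarrow> real" where
  "bil G x y = (\<Sum>i\<in>UNIV. \<Sum>j\<in>UNIV. x$i * real_of_int (G$i$j) * y$j)"

definition int_vec :: "real^'n \<Rightarrow> bool" where
  "int_vec x \<longleftrightarrow> (\<forall>i. x$i \<in> \<int>)"

definition even_lattice :: "int^'n^'n \<Rightarrow> bool" where
  "even_lattice G \<longleftrightarrow> transpose G = G \<and> det G \<noteq> 0 \<and>
     (\<forall>x. int_vec x \<longrightarrow> (\<exists>k::int. bil G x x = of_int (2*k)))"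

definition pos_index :: "int^'n^'n \<Rightarrow> nat" where
  "pos_index G = Max {dim V |V. subspace V \<and> (\<forall>x\<in>V. x \<noteq> 0 \<longrightarrow> bil G x x > 0)}"

definition neg_index :: "int^'n^'n \<Rightarrow> nat" where
  "neg_index G = Max {dim V |V. subspace V \<and> (\<forall>x\<in>V. x \<noteq> 0 \<longrightarrow> bil G x x < 0)}"

definition hyperbolic :: "int^'n^'n \<Rightarrow> bool" where
  "hyperbolic G \<longleftrightarrow> pos_index G = 1 \<and> neg_index G = CARD('n) - 1"

definition neg_definite :: "int^'n^'n \<Rightarrow> bool" where
  "neg_definite G \<longleftrightarrow> (\<forall>x. x \<noteq> 0 \<longrightarrow> bil G x x < 0)"

definition roots :: "int^'n^'n \<Rightarrow> (real^'n) set" where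
  "roots G = {r. int_vec r \<and> bil G r r = -2}"

definition hyp :: "int^'n^'n \<Rightarrow> (real^'n) set \<Rightarrow> (real^'n) set" where
  "hyp G P = {x\<in>P. bil G x x = 1}"

definition chambers :: "int^'n^'n \<Rightarrow> (real^'n) set \<Rightarrow> (real^'n) set set" where
  "chambers G P = components (hyp G P - (\<Union>r\<in>roots G. {x. bil G r x = 0}))"

definition osum :: "int^'n^'n \<Rightarrow> int^'m^'m \<Rightarrow> int^('n+'m)^('n+'m)" where
  "osum A B = (\<chi> i j. case (i, j) of (Inl a, Inl b) \<Rightarrow> A$a$b
                                 | (Inr a, Inr b) \<Rightarrow> B$a$b
                                 | _ \<Rightarrow> 0)"

definition emb :: "real^'n::finite \<Rightarrow> real^('n+'m::finite)" where
  "emb x = (\<chi> i. case i of Inl a \<Rightarrow> x$a | Inr _ \<Rightarrow> 0)"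

end

theory Submission
  imports Defs
begin


lemma bil_add_left: "bil G (x + y) z = bil G x z + bil G y z"
  by (simp add: bil_def algebra_simps sum.distrib)
lemma bil_add_right: "bil G z (x + y) = bil G z x + bil G z y"
  by (simp add: bil_def algebra_simps sum.distrib)
lemma bil_diff_left: "bil G (x - y) z = bil G x z - bil G y z"
  by (simp add: bil_def algebra_simps sum_subtractf)
lemma bil_diff_right: "bil G z (x - y) = bil G z x - bil G z y"
  by (simp add: bil_def algebra_simps sum_subtractf)
lemma bil_scale_left: "bil G (c *\<^sub>R x) z = c * bil G x z"
  by (simp add: bil_def algebra_simps sum_distrib_left)
lemma bil_scale_right: "bil G z (c *\<^sub>R x) = c * bil G z x"
  by (simp add: bil_def algebra_simps sum_distrib_left)
lemma bil_zero_left[simp]: "bil G 0 z = 0" by (simp add: bil_def)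
lemma bil_zero_right[simp]: "bil G z 0 = 0" by (simp add: bil_def)
lemma bil_neg_left: "bil G (- x) z = - bil G x z"
  by (simp add: bil_def sum_negf)
lemma bil_neg_right: "bil G z (- x) = - bil G z x"
  by (simp add: bil_def sum_negf)

lemmas bil_lin = bil_add_left bil_add_right bil_diff_left bil_diff_right bil_scale_left bil_scale_right bil_neg_left bil_neg_right

lemma bil_sym: assumes "transpose G = G" shows "bil G x y = bil G y x"
proof -
  have g: "G$i$j = G$j$i" for i j
  proof -
    have "G$i$j = (transpose G)$i$j" using assms by simp
    also have "\<dots> = G$j$i" by (simp add: transpose_def)
    finally show ?thesis .
  qed
  show ?thesis unfolding bil_def
    by (subst sum.swap) (simp add: g mult.commute mult.left_commute)
qed

lemma continuous_on_bil: "continuous_on S (\<lambda>x. bil G (f x) (g x))" if "continuous_on S f" "continuous_on S g"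
  unfolding bil_def using that by (intro continuous_intros) 

definition projL :: "real^('n::finite+'m::finite) \<Rightarrow> real^'n" where "projL y = (\<chi> a. y$Inl a)"
definition projR :: "real^('n::finite+'m::finite) \<Rightarrow> real^'m" where "projR y = (\<chi> a. y$Inr a)"

lemma bil_osum: "bil (osum A B) y z = bil A (projL y) (projL z) + bil B (projR y) (projR z)"
  unfolding bil_def osum_def projL_def projR_def
  by (simp add: UNIV_Plus_UNIV[symmetric] sum.Plus del: UNIV_Plus_UNIV)


definition lor :: "int^'n^'n \<Rightarrow> bool" where
  "lor G \<longleftrightarrow> (\<forall>x y. bil G x x > 0 \<longrightarrow> bil G x y = 0 \<longrightarrow> bil G y y \<le> 0)"

definition nondeg :: "int^'n^'n \<Rightarrow> bool" where
  "nondeg G \<longleftrightarrow> (\<forall>a. a \<noteq> 0 \<longrightarrow> (\<exists>z. bil G a z \<noteq> 0))"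

lemma rev_CS:
  assumes sym: "transpose G = G" and "lor G" and xx: "bil G x x > 0"
  shows "bil G y y * bil G x x \<le> (bil G x y)^2"
proof -
  define c where "c = bil G x y / bil G x x"
  define y' where "y' = y - c *\<^sub>R x"
  have s: "bil G y x = bil G x y" using bil_sym[OF sym] by simp
  have "bil G x y' = 0" using xx unfolding y'_def c_def by (simp add: bil_lin)
  hence "bil G y' y' \<le> 0" using assms unfolding lor_def by blast
  moreover have "bil G y' y' = bil G y y - (bil G x y)^2 / bil G x x"
    unfolding y'_def c_def using xx s by (simp add: bil_lin power2_eq_square field_simps)
  ultimately show ?thesis using xx by (simp add: field_simps)
qed

lemma iso_orth:
  assumes sym: "transpose G = G" and lor: "lor G" and nd: "nondeg G"
    and xx: "bil G x x > 0" and a: "a \<noteq> 0" and aa: "bil G a a \<ge> 0"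
  shows "bil G x a \<noteq> 0"
proof
  assume xa: "bil G x a = 0"
  hence "bil G a a \<le> 0" using lor xx unfolding lor_def by blast
  hence aa0: "bil G a a = 0" using aa by simp
  obtain z where z: "bil G a z \<noteq> 0" using nd a unfolding nondeg_def by blast
  define z' where "z' = z - (bil G x z / bil G x x) *\<^sub>R x"
  have xz': "bil G x z' = 0" using xx unfolding z'_def by (simp add: bil_lin)
  have ax: "bil G a x = 0" using xa bil_sym[OF sym] by metis
  define p where "p = bil G a z'"
  have p: "p \<noteq> 0" using z ax unfolding p_def z'_def by (simp add: bil_lin)
  define q where "q = bil G z' z'"
  have q: "q \<le> 0" using lor xx xz' unfolding lor_def q_def by blast
  define s where "s = 1 / (1 - q)"
  have s: "s > 0" using q unfolding s_def by simp
  define y where "y = a + (s * p) *\<^sub>R z'"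
  have xy: "bil G x y = 0" unfolding y_def using xa xz' by (simp add: bil_lin)
  have z'a: "bil G z' a = p" using bil_sym[OF sym] p_def by metis
  have "bil G y y = s * p^2 * (2 + s * q)"
    unfolding y_def using aa0 z'a by (simp add: bil_lin p_def[symmetric] q_def[symmetric] power2_eq_square algebra_simps)
  moreover have "2 + s * q > 0" using q unfolding s_def by (simp add: field_simps)
  ultimately have "bil G y y > 0" using s p by simp
  thus False using lor xx xy unfolding lor_def by force
qed

lemma hyperbolic_lor:
  fixes G :: "int^'n^'n"
  assumes sym: "transpose G = G" and hyp: "hyperbolic G"
  shows "lor G"
  unfolding lor_def
proof (intro allI impI, rule ccontr)
  fix x y assume xx: "bil G x x > 0" and xy: "bil G x y = 0" and "\<not> bil G y y \<le> 0"
  hence yy: "bil G y y > 0" by simp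
  have yx: "bil G y x = 0" using xy bil_sym[OF sym] by metis
  define V where "V = span {x, y}"
  have posdef: "\<forall>v\<in>V. v \<noteq> 0 \<longrightarrow> bil G v v > 0"
  proof (intro ballI impI)
    fix v assume "v \<in> V" "v \<noteq> 0"
    then obtain t where "v - t *\<^sub>R x \<in> span {y}"
      unfolding V_def using span_breakdown_eq by blast
    then obtain s where "v - t *\<^sub>R x = s *\<^sub>R y" by (auto simp: span_singleton)
    hence v: "v = s *\<^sub>R y + t *\<^sub>R x" by (simp add: algebra_simps)
    have "bil G v v = s^2 * bil G y y + t^2 * bil G x x"
      unfolding v using xy yx by (simp add: bil_lin power2_eq_square algebra_simps)
    moreover have "s \<noteq> 0 \<or> t \<noteq> 0" using \<open>v \<noteq> 0\<close> v by auto
    moreover have "s^2 * bil G y y \<ge> 0" "t^2 * bil G x x \<ge> 0" using xx yy by simp_all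
    moreover have "s \<noteq> 0 \<Longrightarrow> s^2 * bil G y y > 0" "t \<noteq> 0 \<Longrightarrow> t^2 * bil G x x > 0" using xx yy by simp_all
    ultimately show "bil G v v > 0" by linarith
  qed
  have x0: "x \<noteq> 0" and y0: "y \<noteq> 0" using xx yy by auto
  have xny: "x \<noteq> y" using xx xy by auto
  have "x \<notin> span {y}"
  proof
    assume "x \<in> span {y}"
    then obtain k where "x = k *\<^sub>R y" by (auto simp: span_singleton)
    hence "k * bil G y y = 0" using yx by (simp add: bil_lin)
    hence "k = 0" using yy by simp
    thus False using x0 \<open>x = k *\<^sub>R y\<close> by simp
  qed
  hence ind: "independent {x, y}"
    using y0 xny by (simp add: independent_insert)
  have "dim V = 2" unfolding V_def using dim_span_eq_card_independent[OF ind] xny by simp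
  moreover have "subspace V" unfolding V_def by simp
  ultimately have mem: "2 \<in> {dim V |V. subspace V \<and> (\<forall>x\<in>V. x \<noteq> 0 \<longrightarrow> bil G x x > 0)}"
    using posdef unfolding mem_Collect_eq by (intro exI[of _ V]) simp
  have fin: "finite {dim V |V. subspace V \<and> (\<forall>x\<in>V. x \<noteq> 0 \<longrightarrow> bil G x x > 0)}"
    by (rule finite_subset[of _ "{..CARD('n)}"]) (auto simp: dim_subset_UNIV_cart)
  have "2 \<le> pos_index G" unfolding pos_index_def using Max_ge[OF fin mem] .
  thus False using hyp unfolding hyperbolic_def by simp
qed



lemma comp_absorb:
  assumes "C \<in> components U" "connected T" "T \<subseteq> U" "x \<in> C" "x \<in> T"
  shows "T \<subseteq> C"
  using components_maximal[OF assms(1-3)] assms(4,5) by blast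

locale cone =
  fixes G :: "int^'n^'n" and P :: "(real^'n) set"
  assumes sym: "transpose G = G" and lorG: "lor G"
    and comp: "P \<in> components {x. bil G x x > 0}"
begin

lemma P_pos: "x \<in> P \<Longrightarrow> bil G x x > 0"
  using in_components_subset[OF comp] by blast

lemma P_inner:
  assumes x: "x \<in> P" and y: "y \<in> P" shows "bil G x y > 0"
proof (rule ccontr)
  assume "\<not> bil G x y > 0"
  define g where "g = (\<lambda>z. bil G z y)"
  have "continuous_on P g" unfolding g_def
    by (intro continuous_on_bil continuous_on_id continuous_on_const)
  hence con: "connected (g ` P)"
    using connected_continuous_image in_components_connected[OF comp] by blast
  have nz: "g z \<noteq> 0" if "z \<in> P" for z
  proof -
    have "bil G y y * bil G z z \<le> (g z)^2"
      using rev_CS[OF sym lorG P_pos[OF that]] bil_sym[OF sym] unfolding g_def by metis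
    moreover have "bil G y y * bil G z z > 0" using P_pos[OF that] P_pos[OF y] by simp
    ultimately show ?thesis by auto
  qed
  have "g x \<le> 0" "g y > 0" using \<open>\<not> bil G x y > 0\<close> P_pos[OF y] unfolding g_def by auto
  hence "0 \<in> g ` P" using con x y unfolding connected_iff_interval by (meson imageI less_imp_le)
  thus False using nz by auto
qed

lemma P_convex:
  assumes x: "x \<in> P" and y: "y \<in> P" and t: "0 \<le> t" "t \<le> 1"
  shows "(1 - t) *\<^sub>R x + t *\<^sub>R y \<in> P"
proof -
  have "closed_segment x y \<subseteq> {x. bil G x x > 0}"
  proof
    fix z assume "z \<in> closed_segment x y"
    then obtain u where u: "0 \<le> u" "u \<le> 1" and z: "z = (1 - u) *\<^sub>R x + u *\<^sub>R y"
      by (auto simp: in_segment)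
    have yx: "bil G y x = bil G x y" using bil_sym[OF sym] by metis
    have "bil G z z = (1-u)^2 * bil G x x + u^2 * bil G y y + 2 * u * (1-u) * bil G x y"
      unfolding z by (simp add: bil_lin yx power2_eq_square algebra_simps)
    moreover have "(1-u)^2 * bil G x x + u^2 * bil G y y > 0"
    proof (cases "u = 0")
      case True thus ?thesis using P_pos[OF x] by simp
    next
      case False
      hence "u^2 * bil G y y > 0" using P_pos[OF y] by simp
      moreover have "(1-u)^2 * bil G x x \<ge> 0" using P_pos[OF x] by simp
      ultimately show ?thesis by linarith
    qed
    moreover have "2 * u * (1-u) * bil G x y \<ge> 0" using u P_inner[OF x y] by simp
    ultimately show "z \<in> {x. bil G x x > 0}" by simp
  qed
  hence "closed_segment x y \<subseteq> P"
    using comp_absorb[OF comp connected_segment _ x] by auto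
  moreover have "(1 - t) *\<^sub>R x + t *\<^sub>R y \<in> closed_segment x y"
    unfolding in_segment using t by blast
  ultimately show ?thesis by blast
qed

lemma P_scale:
  assumes x: "x \<in> P" and c: "c > 0" shows "c *\<^sub>R x \<in> P"
proof -
  have "closed_segment x (c *\<^sub>R x) \<subseteq> {x. bil G x x > 0}"
  proof
    fix z assume "z \<in> closed_segment x (c *\<^sub>R x)"
    then obtain u where u: "0 \<le> u" "u \<le> 1" and z: "z = (1 - u) *\<^sub>R x + u *\<^sub>R (c *\<^sub>R x)"
      by (auto simp: in_segment)
    have z': "z = (1 - u + u * c) *\<^sub>R x" unfolding z by (simp add: algebra_simps)
    have "1 - u + u * c > 0"
    proof (cases "u < 1")
      case True thus ?thesis using u c by (smt (verit) mult_nonneg_nonneg)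
    next
      case False thus ?thesis using u c by simp
    qed
    thus "z \<in> {x. bil G x x > 0}" unfolding z' using P_pos[OF x] by (simp add: bil_lin)
  qed
  hence "closed_segment x (c *\<^sub>R x) \<subseteq> P"
    using comp_absorb[OF comp connected_segment _ x] by auto
  thus ?thesis by auto
qed

end


definition nrm :: "int^'n^'n \<Rightarrow> real^'n \<Rightarrow> real^'n" where
  "nrm G w = (1 / sqrt (bil G w w)) *\<^sub>R w"

lemma bil_nrm: "bil G w w > 0 \<Longrightarrow> bil G (nrm G w) (nrm G w) = 1"
  unfolding nrm_def by (simp add: bil_lin power2_eq_square[symmetric])

lemma bil_nrm_r: "bil G r (nrm G w) = (1 / sqrt (bil G w w)) * bil G r w"
  unfolding nrm_def by (simp add: bil_lin)

context cone begin

lemma nrm_P: "w \<in> P \<Longrightarrow> nrm G w \<in> hyp G P"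
  unfolding hyp_def using bil_nrm P_pos P_scale unfolding nrm_def
  by (simp add: bil_nrm[unfolded nrm_def])

lemma chamber_closure:
  assumes x0H: "x0 \<in> hyp G P" and x0r: "\<forall>r\<in>roots G. bil G x0 r \<noteq> 0"
  defines "S \<equiv> hyp G P - (\<Union>r\<in>roots G. {x. bil G r x = 0})"
  defines "C \<equiv> connected_component_set S x0"
  shows "C \<in> chambers G P"
    and "hyp G P \<inter> closure C = {x \<in> hyp G P. \<forall>r\<in>roots G. bil G x0 r * bil G x r \<ge> 0}"
proof -
  have bs: "bil G a b = bil G b a" for a b using bil_sym[OF sym] by metis
  have x0S: "x0 \<in> S" unfolding S_def using x0H x0r bs by auto
  show "C \<in> chambers G P" unfolding chambers_def C_def S_def[symmetric]
    using x0S components_iff by blast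
  have CS: "C \<subseteq> S" unfolding C_def by (rule connected_component_subset)
  have Ccon: "connected C" unfolding C_def by simp
  have x0C: "x0 \<in> C" unfolding C_def using x0S by simp
  define Kw where "Kw = (\<Inter>r\<in>roots G. {x. 0 \<le> bil G x0 r * bil G x r})"
  have Kw_closed: "closed Kw" unfolding Kw_def
    by (intro closed_INT ballI closed_Collect_le continuous_on_const continuous_on_mult continuous_on_bil continuous_on_id)
  have CKw: "C \<subseteq> Kw"
  proof
    fix z assume zC: "z \<in> C"
    show "z \<in> Kw" unfolding Kw_def
    proof (intro InterI, clarsimp)
      fix r assume r: "r \<in> roots G"
      define g where "g = (\<lambda>z. bil G x0 r * bil G z r)"
      have "continuous_on C g" unfolding g_def
        by (intro continuous_on_mult continuous_on_const continuous_on_bil continuous_on_id)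
      hence con: "connected (g ` C)" using connected_continuous_image Ccon by blast
      have nz: "g u \<noteq> 0" if "u \<in> C" for u
        using CS that r x0r bs unfolding S_def g_def by auto
      have gx0: "g x0 > 0" using x0r r not_real_square_gt_zero unfolding g_def by blast
      show "0 \<le> bil G x0 r * bil G z r"
      proof (rule ccontr)
        assume "\<not> ?thesis" hence "g z \<le> 0" unfolding g_def by simp
        hence "0 \<in> g ` C" using con zC x0C gx0 unfolding connected_iff_interval
          by (meson imageI less_imp_le)
        thus False using nz by auto
      qed
    qed
  qed
  have "closure C \<subseteq> Kw" using closure_minimal[OF CKw Kw_closed] .
  hence sub1: "hyp G P \<inter> closure C \<subseteq> {x \<in> hyp G P. \<forall>r\<in>roots G. bil G x0 r * bil G x r \<ge> 0}"
    unfolding Kw_def by blast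
  have sub2: "x \<in> closure C" if xH: "x \<in> hyp G P" and xw: "\<forall>r\<in>roots G. bil G x0 r * bil G x r \<ge> 0" for x
  proof -
    define w where "w = (\<lambda>t::real. (1 - t) *\<^sub>R x + t *\<^sub>R x0)"
    define f where "f = (\<lambda>t. nrm G (w t))"
    have xP: "x \<in> P" and x0P: "x0 \<in> P" using xH x0H unfolding hyp_def by auto
    have wP: "w t \<in> P" if "t \<in> {0..1}" for t
      using P_convex[OF xP x0P] that unfolding w_def by auto
    have wpos: "bil G (w t) (w t) > 0" if "t \<in> {0..1}" for t using P_pos wP that by blast
    have fcont: "continuous_on {0..1} f" unfolding f_def nrm_def w_def
      apply (intro continuous_intros continuous_on_bil)
      using wpos unfolding w_def by (auto simp: less_le)
    have fH: "f t \<in> hyp G P" if "t \<in> {0..1}" for t unfolding f_def using nrm_P wP that by blast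
    have fS: "f ` {0<..1} \<subseteq> S"
    proof clarify
      fix t :: real assume t: "t \<in> {0<..1}"
      hence t01: "t \<in> {0..1}" by auto
      have "bil G r (f t) \<noteq> 0" if r: "r \<in> roots G" for r
      proof -
        have "bil G x0 r * bil G (w t) r = (1 - t) * (bil G x0 r * bil G x r) + t * (bil G x0 r)^2"
          unfolding w_def by (simp add: bil_lin power2_eq_square algebra_simps)
        moreover have "(1 - t) * (bil G x0 r * bil G x r) \<ge> 0" using xw r t by simp
        moreover have "t * (bil G x0 r)^2 > 0" using t x0r r by simp
        ultimately have "bil G (w t) r \<noteq> 0" by auto
        hence "bil G r (w t) \<noteq> 0" using bs by metis
        thus ?thesis unfolding f_def bil_nrm_r using wpos[OF t01] by simp
      qed
      thus "f t \<in> S" unfolding S_def using fH[OF t01] by auto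
    qed
    have f1: "f 1 = x0" unfolding f_def w_def nrm_def using x0H unfolding hyp_def by simp
    have "connected (f ` {0<..1})"
      by (rule connected_continuous_image[OF continuous_on_subset[OF fcont]]) auto
    hence "f ` {0<..1} \<subseteq> C" unfolding C_def
      using connected_component_maximal fS f1 by (metis greaterThanAtMost_iff image_eqI order_refl zero_less_one)
    hence "f ` {0<..1} \<subseteq> closure C" using closure_subset by blast
    hence "f ` closure {0<..1} \<subseteq> closure C"
      by (intro image_closure_subset) (auto simp: fcont)
    moreover have "f 0 = x" unfolding f_def w_def nrm_def using xH unfolding hyp_def by simp
    ultimately show ?thesis by auto
  qed
  show "hyp G P \<inter> closure C = {x \<in> hyp G P. \<forall>r\<in>roots G. bil G x0 r * bil G x r \<ge> 0}"
    using sub1 sub2 by blast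
qed

end


lemma det_real_of_int:
  fixes G :: "int^'n^'n"
  shows "det (\<chi> i j. real_of_int (G$i$j)) = real_of_int (det G)"
  unfolding det_def by simp

lemma sum_delta_mult: "(\<Sum>k\<in>UNIV. c * ((if k = (j::'n::finite) then 1 else 0) * (f k::real))) = c * f j"
proof -
  have "(\<Sum>k\<in>UNIV. c * ((if k = j then 1 else 0) * (f k::real))) = (\<Sum>k\<in>UNIV. if k = j then c * f k else 0)"
    by (rule sum.cong) auto
  thus ?thesis by simp
qed

lemma sum_delta_mult2: "(\<Sum>k\<in>UNIV. (g k::real) * (if k = (j::'n::finite) then 1 else 0)) = g j"
proof -
  have "(\<Sum>k\<in>UNIV. (g k::real) * (if k = j then 1 else 0)) = (\<Sum>k\<in>UNIV. if k = j then g k else 0)"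
    by (rule sum.cong) auto
  thus ?thesis by simp
qed

lemma bil_axis: "bil G a (axis j 1) = (transpose (\<chi> i j. real_of_int (G$i$j)) *v a)$j"
  unfolding bil_def axis_def matrix_vector_mult_def transpose_def
  by (simp add: sum_delta_mult2; simp add: mult.commute)

lemma even_nondeg:
  fixes G :: "int^'n^'n"
  assumes "even_lattice G" shows "nondeg G"
  unfolding nondeg_def
proof (intro allI impI, rule ccontr)
  fix a :: "real^'n" assume a: "a \<noteq> 0" and "\<not> (\<exists>z. bil G a z \<noteq> 0)"
  hence z: "bil G a z = 0" for z by blast
  define Gr where "Gr = (\<chi> i j. real_of_int (G$i$j))"
  have "det (transpose Gr) \<noteq> 0" using assms unfolding even_lattice_def Gr_def
    by (simp add: det_real_of_int)
  hence "inj ((*v) (transpose Gr))" using invertible_det_nz inj_matrix_vector_mult by blast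
  moreover have "transpose Gr *v a = 0"
    using z[of "axis _ 1"] unfolding bil_axis Gr_def[symmetric] by (simp add: vec_eq_iff)
  ultimately have "a = 0" by (metis matrix_vector_mult_0_right injD)
  thus False using a by simp
qed

lemma dense_nonhyper:
  fixes r :: "real^'n" assumes z: "bil G r z \<noteq> 0"
  shows "closure {x. bil G r x \<noteq> 0} = UNIV"
proof -
  have "y \<in> closure {x. bil G r x \<noteq> 0}" for y
  proof (cases "bil G r y = 0")
    case False show ?thesis by (rule subsetD[OF closure_subset]) (simp add: False)
  next
    case True
    show ?thesis unfolding closure_approachable
    proof (intro allI impI)
      fix e :: real assume e: "e > 0"
      define c where "c = e / (2 * (norm z + 1))"
      have nz1: "2 * (norm z + 1) > 0" by (smt (verit) norm_ge_zero)
      have c: "c > 0" unfolding c_def using e nz1 by (rule divide_pos_pos)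
      have "c * norm z < e"
      proof -
        have "c * norm z \<le> c * (norm z + 1)" using c by simp
        also have "\<dots> = e / 2"
        proof -
          have "norm z + 1 \<noteq> 0" by (smt (verit) norm_ge_zero)
          thus ?thesis unfolding c_def by (simp add: field_simps)
        qed
        finally show ?thesis using e by simp
      qed
      moreover have "bil G r (y + c *\<^sub>R z) \<noteq> 0" using True z c by (simp add: bil_lin)
      ultimately show "\<exists>x\<in>{x. bil G r x \<noteq> 0}. dist x y < e"
        using c by (intro bexI[of _ "y + c *\<^sub>R z"]) (auto simp: dist_norm)
    qed
  qed
  thus ?thesis by auto
qed

lemma avoid:
  fixes U :: "(real^'n) set" and G :: "int^'n^'n"
  assumes "open U" "U \<noteq> {}" "countable R" and nz: "\<forall>r\<in>R. \<exists>z. bil G r z \<noteq> 0"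
  shows "\<exists>x\<in>U. \<forall>r\<in>R. bil G r x \<noteq> 0"
proof -
  define \<G> where "\<G> = (\<lambda>r. {x. bil G r x \<noteq> 0}) ` R"
  have "UNIV \<subseteq> closure (\<Inter>\<G>)"
  proof (rule Baire)
    show "countable \<G>" unfolding \<G>_def using assms by simp
    fix T assume "T \<in> \<G>"
    then obtain r where r: "r \<in> R" and T: "T = {x. bil G r x \<noteq> 0}" unfolding \<G>_def by blast
    have "open T" unfolding T
      by (intro open_Collect_neq continuous_on_bil continuous_on_id continuous_on_const) 
    moreover have "closure T = UNIV" using nz r dense_nonhyper T by blast
    ultimately show "openin (top_of_set UNIV) T \<and> UNIV \<subseteq> closure T" by simp
  qed simp
  hence "U \<inter> closure (\<Inter>\<G>) \<noteq> {}" using assms by auto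
  hence "U \<inter> \<Inter>\<G> \<noteq> {}" using open_Int_closure_eq_empty assms by blast
  thus ?thesis unfolding \<G>_def by blast
qed

lemma countable_roots: "countable (roots (G::int^'n^'n))"
proof -
  have "roots G \<subseteq> range (\<lambda>v::int^'n. \<chi> i. real_of_int (v$i))"
  proof
    fix r assume "r \<in> roots G"
    hence "\<forall>i. r$i \<in> \<int>" unfolding roots_def int_vec_def by blast
    hence "\<forall>i. \<exists>k. r$i = real_of_int k" by (meson Ints_cases)
    then obtain f where "\<forall>i. r$i = real_of_int (f i)" by metis
    hence "r = (\<chi> i. real_of_int ((\<chi> i. f i)$i))" by (simp add: vec_eq_iff)
    thus "r \<in> range (\<lambda>v::int^'n. \<chi> i. real_of_int (v$i))" by blast
  qed
  thus ?thesis by (rule countable_subset) simp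
qed

lemma roots_nz: "r \<in> roots G \<Longrightarrow> \<exists>z. bil G r z \<noteq> 0"
  unfolding roots_def by (intro exI[of _ r]) auto

lemma CS_neg:
  assumes sym: "transpose G = G" and nd: "neg_definite G"
  shows "(bil G c d)^2 \<le> bil G c c * bil G d d"
proof (cases "c = 0")
  case True thus ?thesis by simp
next
  case False
  hence cc: "bil G c c < 0" using nd unfolding neg_definite_def by blast
  have bs: "bil G a b = bil G b a" for a b using bil_sym[OF sym] by metis
  define d' where "d' = d - (bil G c d / bil G c c) *\<^sub>R c"
  have "bil G d' d' \<le> 0" using nd unfolding neg_definite_def by (metis order_refl bil_zero_left less_imp_le)
  moreover have "bil G d' d' = bil G d d - (bil G c d)^2 / bil G c c"
    unfolding d'_def using cc bs[of d c] by (simp add: bil_lin power2_eq_square field_simps)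
  ultimately have "bil G d d \<le> (bil G c d)^2 / bil G c c" by simp
  hence "bil G d d * bil G c c \<ge> (bil G c d)^2" using cc by (simp add: field_simps)
  thus ?thesis by (simp add: mult.commute)
qed



definition join :: "real^'n::finite \<Rightarrow> real^'m::finite \<Rightarrow> real^('n+'m)" where
  "join a b = (\<chi> i. case i of Inl j \<Rightarrow> a$j | Inr j \<Rightarrow> b$j)"

lemma projL_join[simp]: "projL (join a b) = a" by (simp add: projL_def join_def vec_eq_iff)
lemma projR_join[simp]: "projR (join a b) = b" by (simp add: projR_def join_def vec_eq_iff)
lemma emb_join: "emb x = join x 0" by (simp add: emb_def join_def vec_eq_iff split: sum.splits)
lemma join_proj: "join (projL y) (projR y) = y"
  by (simp add: projL_def projR_def join_def vec_eq_iff split: sum.splits)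
lemma join_add: "join a b + join c d = join (a + c) (b + d)"
  by (simp add: join_def vec_eq_iff split: sum.splits)
lemma join_scale: "t *\<^sub>R join a b = join (t *\<^sub>R a) (t *\<^sub>R b)"
  by (simp add: join_def vec_eq_iff split: sum.splits)
lemma join_eq0: "join a b = 0 \<longleftrightarrow> a = 0 \<and> b = 0"
proof
  assume h: "join a b = 0"
  have "a = projL (join a b)" "b = projR (join a b)" by simp_all
  thus "a = 0 \<and> b = 0" unfolding h by (simp add: projL_def projR_def vec_eq_iff)
qed (simp add: join_def vec_eq_iff split: sum.splits)

lemma int_vec_projL: "int_vec r \<Longrightarrow> int_vec (projL r)" by (simp add: int_vec_def projL_def)
lemma int_vec_projR: "int_vec r \<Longrightarrow> int_vec (projR r)" by (simp add: int_vec_def projR_def)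
lemma int_vec_join: "int_vec a \<Longrightarrow> int_vec b \<Longrightarrow> int_vec (join a b)"
  by (simp add: int_vec_def join_def split: sum.splits)
lemma int_vec_0: "int_vec 0" by (simp add: int_vec_def)

lemma osum_sym:
  assumes "transpose A = A" "transpose B = B"
  shows "transpose (osum A B) = osum A B"
proof -
  have a: "A$i$j = A$j$i" for i j by (metis assms(1) transpose_def vec_lambda_beta)
  have b: "B$i$j = B$j$i" for i j by (metis assms(2) transpose_def vec_lambda_beta)
  show ?thesis by (simp add: transpose_def osum_def vec_eq_iff a b split: sum.splits)
qed

lemma lor_osum:
  assumes sA: "transpose A = A" and sB: "transpose B = B" and lA: "lor A" and nB: "neg_definite B"
  shows "lor (osum A B)"
  unfolding lor_def
proof (intro allI impI)
  fix y z assume yy: "bil (osum A B) y y > 0" and yz: "bil (osum A B) y z = 0"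
  define a where "a = projL y" define c where "c = projR y"
  define b where "b = projL z" define d where "d = projR z"
  have cc: "bil B c c \<le> 0" using nB unfolding neg_definite_def by (metis bil_zero_left less_imp_le order_refl)
  have dd: "bil B d d \<le> 0" using nB unfolding neg_definite_def by (metis bil_zero_left less_imp_le order_refl)
  have aa: "bil A a a > 0" using yy cc unfolding bil_osum a_def[symmetric] c_def[symmetric] by linarith
  have ab: "bil A a b = - bil B c d" using yz unfolding bil_osum a_def[symmetric] b_def[symmetric] c_def[symmetric] d_def[symmetric] by linarith
  have "bil A b b * bil A a a \<le> (bil A a b)^2" by (rule rev_CS[OF sA lA aa])
  also have "\<dots> = (bil B c d)^2" using ab by simp
  also have "\<dots> \<le> bil B c c * bil B d d" by (rule CS_neg[OF sB nB])
  finally have 1: "bil A b b * bil A a a \<le> bil B c c * bil B d d" .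
  have "(bil A b b + bil B d d) * bil A a a \<le> bil B d d * (bil B c c + bil A a a)"
    using 1 by (simp add: algebra_simps)
  also have "\<dots> \<le> 0" using dd yy unfolding bil_osum a_def[symmetric] c_def[symmetric]
    by (simp add: mult_nonpos_nonneg)
  finally have "(bil A b b + bil B d d) * bil A a a \<le> 0" .
  hence "bil A b b + bil B d d \<le> 0" using aa by (simp add: mult_le_0_iff)
  thus "bil (osum A B) z z \<le> 0" unfolding bil_osum b_def d_def .
qed

lemma int_ge1_norm:
  assumes "int_vec a" "a \<noteq> (0::real^'n)" shows "norm a \<ge> 1"
proof -
  obtain i where i: "a$i \<noteq> 0" using assms(2) by (metis vec_eq_iff zero_index)
  have "a$i \<in> \<int>" using assms(1) unfolding int_vec_def by blast
  hence "\<bar>a$i\<bar> \<ge> 1" using i by (simp add: Ints_nonzero_abs_ge1)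
  thus ?thesis using component_le_norm_cart[of a i] by linarith
qed

context cone begin

lemma lambda_bound:
  assumes nd: "nondeg G" and x0: "bil G x0 x0 = 1"
  shows "\<exists>\<delta>>0. \<forall>a. int_vec a \<longrightarrow> a \<noteq> 0 \<longrightarrow> bil G a a \<ge> 0 \<longrightarrow> (bil G x0 a)^2 \<ge> (\<delta> + bil G a a) / 2"
proof -
  define Q where "Q = (\<lambda>a. 2 * (bil G x0 a)^2 - bil G a a)"
  have Qpos: "Q a > 0" if a: "a \<noteq> 0" for a
  proof (rule ccontr)
    assume "\<not> Q a > 0"
    have "bil G a a * bil G x0 x0 \<le> (bil G x0 a)^2" using rev_CS[OF sym lorG, of x0 a] x0 by simp
    hence "bil G a a \<le> (bil G x0 a)^2" using x0 by simp
    moreover have "2 * (bil G x0 a)^2 \<le> bil G a a" using \<open>\<not> Q a > 0\<close> unfolding Q_def by simp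
    ultimately have "(bil G x0 a)^2 \<le> 0" by linarith
    hence "bil G x0 a = 0" by simp
    moreover have "bil G a a \<ge> 0" using \<open>2 * (bil G x0 a)^2 \<le> bil G a a\<close> \<open>bil G x0 a = 0\<close> by simp
    ultimately have "bil G x0 a = 0" "bil G a a \<ge> 0" by simp_all
    thus False using iso_orth[OF sym lorG nd _ a] x0 by simp
  qed
  have Qscale: "Q (c *\<^sub>R a) = c^2 * Q a" for c a
    unfolding Q_def by (simp add: bil_lin power2_eq_square algebra_simps)
  have cont: "continuous_on (sphere 0 1) Q" unfolding Q_def
    by (intro continuous_intros continuous_on_bil)
  have ne: "sphere (0::real^'n) 1 \<noteq> {}" by simp
  obtain m where m: "m \<in> sphere 0 1" and mmin: "\<forall>y\<in>sphere 0 1. Q m \<le> Q y"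
    using continuous_attains_inf[OF compact_sphere ne cont] by blast
  define \<delta> where "\<delta> = Q m"
  have \<delta>: "\<delta> > 0" unfolding \<delta>_def using Qpos m by (metis mem_sphere_0 norm_zero zero_neq_one)
  have low: "Q a \<ge> \<delta> * (norm a)^2" for a
  proof (cases "a = 0")
    case True thus ?thesis unfolding Q_def by simp
  next
    case False
    hence n: "norm a > 0" by simp
    have "(1 / norm a) *\<^sub>R a \<in> sphere 0 1" using n by simp
    hence "\<delta> \<le> Q ((1 / norm a) *\<^sub>R a)" using mmin unfolding \<delta>_def by blast
    also have "\<dots> = Q a / (norm a)^2" unfolding Qscale by (simp add: power2_eq_square)
    finally show ?thesis using n by (simp add: field_simps)
  qed
  show ?thesis
  proof (intro exI[of _ \<delta>] conjI allI impI \<delta>)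
    fix a assume ai: "int_vec a" and a0: "a \<noteq> 0" and "bil G a a \<ge> 0"
    have "norm a \<ge> 1" using int_ge1_norm[OF ai a0] .
    hence "(norm a)^2 \<ge> 1" by (simp add: one_le_power)
    hence "\<delta> * (norm a)^2 \<ge> \<delta>" using \<delta> by simp
    hence "Q a \<ge> \<delta>" using low[of a] by linarith
    thus "(bil G x0 a)^2 \<ge> (\<delta> + bil G a a) / 2" unfolding Q_def by simp
  qed
qed

lemma sign_const:
  assumes nd: "nondeg G" and x: "x \<in> P" and x0: "x0 \<in> P" and a: "a \<noteq> 0" and aa: "bil G a a \<ge> 0"
  shows "bil G x0 a * bil G x a > 0"
proof (rule ccontr)
  assume neg: "\<not> bil G x0 a * bil G x a > 0"
  define p where "p = bil G x0 a" define q where "q = bil G x a"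
  have p: "p \<noteq> 0" unfolding p_def using iso_orth[OF sym lorG nd P_pos[OF x0] a aa] .
  have q: "q \<noteq> 0" unfolding q_def using iso_orth[OF sym lorG nd P_pos[OF x] a aa] .
  have "p * q \<le> 0" using neg unfolding p_def q_def by simp
  moreover have "p * q \<noteq> 0" using p q by simp
  ultimately have pq: "p * q < 0" by linarith
  define t where "t = p / (p - q)"
  have t: "0 \<le> t" "t \<le> 1" "(1 - t) * p + t * q = 0"
  proof -
    have "(p > 0 \<and> q < 0) \<or> (p < 0 \<and> q > 0)" using pq by (simp add: mult_less_0_iff)
    hence pq': "p - q \<noteq> 0" by auto
    show "(1 - t) * p + t * q = 0" unfolding t_def using pq' by (simp add: field_simps)
    show "0 \<le> t" unfolding t_def using \<open>(p > 0 \<and> q < 0) \<or> (p < 0 \<and> q > 0)\<close>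
      by (auto simp: divide_nonneg_pos divide_nonpos_neg)
    show "t \<le> 1" unfolding t_def using \<open>(p > 0 \<and> q < 0) \<or> (p < 0 \<and> q > 0)\<close>
      by (auto simp: divide_le_eq)
  qed
  have "(1 - t) *\<^sub>R x0 + t *\<^sub>R x \<in> P" using P_convex[OF x0 x t(1,2)] .
  moreover have "bil G ((1 - t) *\<^sub>R x0 + t *\<^sub>R x) a = 0"
    using t(3) unfolding p_def q_def by (simp add: bil_lin)
  ultimately show False using iso_orth[OF sym lorG nd P_pos[OF \<open>(1 - t) *\<^sub>R x0 + t *\<^sub>R x \<in> P\<close>] a aa] by blast
qed

end


lemma sq_lt_prod_pos:
  fixes c d :: real assumes "d^2 < c^2" shows "c * (c + d) > 0"
proof -
  have "\<bar>d\<bar> < \<bar>c\<bar>" using assms by (metis abs_ge_zero power2_abs power2_less_imp_less)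
  thus ?thesis
    by (cases "c > 0") (auto intro: mult_pos_pos mult_neg_neg simp: abs_less_iff)
qed

lemma sign_trans:
  fixes p s t :: real assumes "p * s > 0" "p * t > 0" shows "s * t > 0"
  using assms by (auto simp: zero_less_mult_iff)

lemma even_neg_le:
  assumes ev: "even_lattice G" and nd: "neg_definite G" and b: "int_vec b" "b \<noteq> 0"
  shows "bil G b b \<le> -2"
proof -
  obtain k :: int where k: "bil G b b = of_int (2 * k)" using ev b unfolding even_lattice_def by blast
  have "bil G b b < 0" using nd b unfolding neg_definite_def by blast
  hence "k < 0" using k by simp
  hence "k \<le> -1" by simp
  thus ?thesis using k by simp
qed

theorem lemma2p5:
  fixes GL :: "int^'n^'n" and GM :: "int^'m^'m"
    and P :: "(real^'n) set" and PLM :: "(real^('n+'m)) set"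
  assumes "even_lattice GL" and "hyperbolic GL"
    and "even_lattice GM" and "neg_definite GM"
    and "P \<in> components {x. bil GL x x > 0}"
    and "PLM \<in> components {y. bil (osum GL GM) y y > 0}" and "emb ` P \<subseteq> PLM"
  shows "\<exists>DL DLM. DL \<in> chambers GL P \<and> DLM \<in> chambers (osum GL GM) PLM \<and>
     emb ` (hyp GL P \<inter> closure DL) = hyp (osum GL GM) PLM \<inter> closure DLM \<inter> emb ` hyp GL P"
proof -
  note evL = assms(1) and hypL = assms(2) and evM = assms(3) and ndM = assms(4)
    and PC = assms(5) and PLMC = assms(6) and embP = assms(7)
  have symL: "transpose GL = GL" using evL unfolding even_lattice_def by simp
  have symM: "transpose GM = GM" using evM unfolding even_lattice_def by simp
  have lorL: "lor GL" by (rule hyperbolic_lor[OF symL hypL])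
  have nondL: "nondeg GL" by (rule even_nondeg[OF evL])
  define GLM where "GLM = osum GL GM"
  have symLM: "transpose GLM = GLM" unfolding GLM_def by (rule osum_sym[OF symL symM])
  have lorLM: "lor GLM" unfolding GLM_def by (rule lor_osum[OF symL symM lorL ndM])
  interpret L: cone GL P using symL lorL PC by unfold_locales
  interpret LM: cone GLM PLM using symLM lorLM PLMC unfolding GLM_def by unfold_locales
  have bsL: "bil GL a b = bil GL b a" for a b using bil_sym[OF symL] by metis
  have bsM: "bil GM a b = bil GM b a" for a b using bil_sym[OF symM] by metis
  have bsLM: "bil GLM a b = bil GLM b a" for a b using bil_sym[OF symLM] by metis
  have bilLM: "bil GLM (join a b) (join c d) = bil GL a c + bil GM b d" for a b c d
    unfolding GLM_def bil_osum by simp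
  have bilLM': "bil GLM (join a b) r = bil GL a (projL r) + bil GM b (projR r)" for a b r
    using bilLM[of a b "projL r" "projR r"] join_proj[of r] by simp

  have openP: "open P"
    by (rule open_components[OF _ PC]) (intro open_Collect_less continuous_on_const continuous_on_bil continuous_on_id)
  obtain x0' where x0'P: "x0' \<in> P" and x0'r: "\<forall>a\<in>roots GL. bil GL a x0' \<noteq> 0"
    using avoid[OF openP in_components_nonempty[OF PC] countable_roots] roots_nz by blast
  define x0 where "x0 = nrm GL x0'"
  have x0H: "x0 \<in> hyp GL P" unfolding x0_def by (rule L.nrm_P[OF x0'P])
  have x0P: "x0 \<in> P" and x0x0: "bil GL x0 x0 = 1" using x0H unfolding hyp_def by auto
  have x0r: "\<forall>a\<in>roots GL. bil GL x0 a \<noteq> 0"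
  proof
    fix a assume "a \<in> roots GL"
    hence "bil GL a x0' \<noteq> 0" using x0'r by blast
    moreover have "sqrt (bil GL x0' x0') > 0" using L.P_pos[OF x0'P] by simp
    ultimately have "bil GL a x0 \<noteq> 0" unfolding x0_def bil_nrm_r by simp
    thus "bil GL x0 a \<noteq> 0" using bsL by metis
  qed
  obtain v where vr: "\<forall>b\<in>roots GM. bil GM b v \<noteq> 0"
    using avoid[OF open_UNIV _ countable_roots, of GM] roots_nz by blast
  define V where "V = - bil GM v v"
  have V: "V \<ge> 0" using ndM unfolding V_def neg_definite_def by (metis bil_zero_left less_imp_le neg_0_le_iff_le order_refl)
  obtain \<delta> where \<delta>: "\<delta> > 0"
    and \<delta>b: "\<And>a. int_vec a \<Longrightarrow> a \<noteq> 0 \<Longrightarrow> bil GL a a \<ge> 0 \<Longrightarrow> (bil GL x0 a)^2 \<ge> (\<delta> + bil GL a a) / 2"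
    using L.lambda_bound[OF nondL x0x0] by blast
  define \<mu> where "\<mu> = min (\<delta>/4) (1/2)"
  have \<mu>: "\<mu> > 0" unfolding \<mu>_def using \<delta> by simp
  define \<epsilon> where "\<epsilon> = min 1 \<mu> / (V + 1)"
  have \<epsilon>: "\<epsilon> > 0" unfolding \<epsilon>_def using \<mu> V by simp
  define E where "E = \<epsilon>^2 * V"
  have E0: "E \<ge> 0" unfolding E_def using V by simp
  have E\<mu>: "E < \<mu>"
  proof -
    have e1: "\<epsilon> * (V + 1) = min 1 \<mu>" unfolding \<epsilon>_def using V by simp
    have "\<epsilon> \<le> 1" unfolding \<epsilon>_def using V \<mu> by (simp add: divide_le_eq)
    have "E < \<epsilon>^2 * (V + 1)" unfolding E_def using \<epsilon> by (simp add: algebra_simps)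
    also have "\<dots> = \<epsilon> * min 1 \<mu>" using e1 by (simp add: power2_eq_square algebra_simps)
    also have "\<dots> \<le> 1 * min 1 \<mu>" using \<open>\<epsilon> \<le> 1\<close> \<mu> by (intro mult_right_mono) auto
    also have "\<dots> \<le> \<mu>" by simp
    finally show ?thesis .
  qed
  have E1: "E < \<delta>/4" "E < 1/2" using E\<mu> unfolding \<mu>_def by auto
  define y0 where "y0 = join x0 (\<epsilon> *\<^sub>R v)"
  have y0y0: "bil GLM y0 y0 = 1 - E"
    unfolding y0_def bilLM E_def V_def using x0x0 by (simp add: bil_lin power2_eq_square)
  have embx0: "emb x0 \<in> PLM" using embP x0P by blast
  have "closed_segment (emb x0) y0 \<subseteq> {y. bil GLM y y > 0}"
  proof
    fix z assume "z \<in> closed_segment (emb x0) y0"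
    then obtain u where u: "0 \<le> u" "u \<le> 1" and z: "z = (1 - u) *\<^sub>R emb x0 + u *\<^sub>R y0"
      by (auto simp: in_segment)
    have z': "z = join x0 ((u * \<epsilon>) *\<^sub>R v)"
      unfolding z y0_def emb_join join_scale join_add by (simp add: algebra_simps)
    have "bil GLM z z = 1 - u^2 * E"
      unfolding z' bilLM E_def V_def using x0x0 by (simp add: bil_lin power2_eq_square algebra_simps)
    moreover have "u^2 * E \<le> E" using u E0 by (simp add: mult_left_le_one_le power_le_one)
    ultimately show "z \<in> {y. bil GLM y y > 0}" using E1 by simp
  qed
  hence "closed_segment (emb x0) y0 \<subseteq> PLM"
    using comp_absorb[OF PLMC[folded GLM_def] connected_segment _ embx0] by auto
  hence y0P: "y0 \<in> PLM" by auto
  define y1 where "y1 = nrm GLM y0"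
  have y1H: "y1 \<in> hyp GLM PLM" unfolding y1_def by (rule LM.nrm_P[OF y0P])
  define k where "k = 1 / sqrt (1 - E)"
  have k: "k > 0" unfolding k_def using E1 by simp
  have y1r: "bil GLM y1 r = k * bil GLM y0 r" for r
    using bil_nrm_r[of GLM r y0] bsLM unfolding y1_def k_def y0y0 by metis
  have y0r: "bil GLM y0 r = bil GL x0 (projL r) + \<epsilon> * bil GM v (projR r)" for r
    unfolding y0_def bilLM' by (simp add: bil_lin)
  have rootinfo: "int_vec (projL r) \<and> int_vec (projR r) \<and> bil GL (projL r) (projL r) + bil GM (projR r) (projR r) = -2"
    if "r \<in> roots GLM" for r
    using that unfolding roots_def GLM_def bil_osum by (auto intro: int_vec_projL int_vec_projR)
  have caseB0: "projL r \<in> roots GL \<and> bil GLM y0 r = bil GL x0 (projL r)"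
    if r: "r \<in> roots GLM" and b0: "projR r = 0" for r
    using rootinfo[OF r] b0 y0r[of r] unfolding roots_def by simp
  have caseA0: "bil GLM y0 r \<noteq> 0"
    if r: "r \<in> roots GLM" and a0: "projL r = 0" for r
  proof -
    have "projR r \<in> roots GM" using rootinfo[OF r] a0 unfolding roots_def by simp
    hence "bil GM v (projR r) \<noteq> 0" using vr bsM by metis
    thus ?thesis using y0r[of r] a0 \<epsilon> by simp
  qed
  have caseMix: "bil GL (projL r) (projL r) \<ge> 0 \<and> bil GL x0 (projL r) * bil GLM y0 r > 0"
    if r: "r \<in> roots GLM" and a0: "projL r \<noteq> 0" and b0: "projR r \<noteq> 0" for r
  proof -
    define a where "a = projL r" define b where "b = projR r"
    have ai: "int_vec a" and bi: "int_vec b" and ab: "bil GL a a + bil GM b b = -2"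
      using rootinfo[OF r] unfolding a_def b_def by auto
    have "bil GM b b \<le> -2" using even_neg_le[OF evM ndM bi] b0 unfolding b_def by simp
    hence aa: "bil GL a a \<ge> 0" using ab by simp
    have c2: "(bil GL x0 a)^2 \<ge> (\<delta> + bil GL a a) / 2" using \<delta>b[OF ai _ aa] a0 unfolding a_def by simp
    have "(bil GM v b)^2 \<le> bil GM v v * bil GM b b" by (rule CS_neg[OF symM ndM])
    also have "\<dots> = V * (2 + bil GL a a)"
    proof -
      have bb: "bil GM b b = -2 - bil GL a a" using ab by simp
      show ?thesis unfolding V_def bb by (simp add: algebra_simps)
    qed
    finally have vb: "(bil GM v b)^2 \<le> V * (2 + bil GL a a)" .
    have "(\<epsilon> * bil GM v b)^2 = \<epsilon>^2 * (bil GM v b)^2" by (simp add: power_mult_distrib)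
    also have "\<dots> \<le> \<epsilon>^2 * (V * (2 + bil GL a a))" using vb by (simp add: mult_left_mono)
    also have "\<dots> = 2 * E + E * bil GL a a" unfolding E_def by (simp add: algebra_simps)
    also have "\<dots> < (\<delta> + bil GL a a) / 2"
    proof -
      have "E * bil GL a a \<le> (1/2) * bil GL a a" using E1 aa by (intro mult_right_mono) auto
      thus ?thesis using E1 by simp
    qed
    also have "\<dots> \<le> (bil GL x0 a)^2" by (rule c2)
    finally have "(\<epsilon> * bil GM v b)^2 < (bil GL x0 a)^2" .
    hence "bil GL x0 a * (bil GL x0 a + \<epsilon> * bil GM v b) > 0" by (rule sq_lt_prod_pos)
    thus ?thesis using aa y0r[of r] unfolding a_def b_def by simp
  qed
  have y0nz: "bil GLM y0 r \<noteq> 0" if r: "r \<in> roots GLM" for r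
  proof (cases "projR r = 0")
    case True thus ?thesis using caseB0[OF r] x0r by simp
  next
    case False
    show ?thesis
    proof (cases "projL r = 0")
      case True thus ?thesis using caseA0[OF r] by simp
    next
      case False2: False
      thus ?thesis using caseMix[OF r False2 False] by auto
    qed
  qed
  have y1r_nz: "\<forall>r\<in>roots GLM. bil GLM y1 r \<noteq> 0" using y0nz y1r k by simp
  define SL where "SL = hyp GL P - (\<Union>r\<in>roots GL. {x. bil GL r x = 0})"
  define SLM where "SLM = hyp GLM PLM - (\<Union>r\<in>roots GLM. {x. bil GLM r x = 0})"
  define DL where "DL = connected_component_set SL x0"
  define DLM where "DLM = connected_component_set SLM y1"
  have DLc: "DL \<in> chambers GL P" and eqL: "hyp GL P \<inter> closure DL = {x \<in> hyp GL P. \<forall>r\<in>roots GL. bil GL x0 r * bil GL x r \<ge> 0}"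
    using L.chamber_closure[OF x0H x0r] unfolding DL_def SL_def by auto
  have DLMc: "DLM \<in> chambers GLM PLM" and eqLM: "hyp GLM PLM \<inter> closure DLM = {y \<in> hyp GLM PLM. \<forall>r\<in>roots GLM. bil GLM y1 r * bil GLM y r \<ge> 0}"
    using LM.chamber_closure[OF y1H y1r_nz] unfolding DLM_def SLM_def by auto
  have embH: "emb x \<in> hyp GLM PLM" if x: "x \<in> hyp GL P" for x
  proof -
    have "emb x \<in> PLM" using embP x unfolding hyp_def by blast
    moreover have "bil GLM (emb x) (emb x) = 1" using x unfolding hyp_def emb_join bilLM by simp
    ultimately show ?thesis unfolding hyp_def by simp
  qed
  have embr: "bil GLM (emb x) r = bil GL x (projL r)" for x r
    unfolding emb_join bilLM' by simp
  have equiv: "(\<forall>a\<in>roots GL. bil GL x0 a * bil GL x a \<ge> 0) \<longleftrightarrow> (\<forall>r\<in>roots GLM. bil GLM y1 r * bil GLM (emb x) r \<ge> 0)"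
    if x: "x \<in> hyp GL P" for x
  proof
    assume h: "\<forall>a\<in>roots GL. bil GL x0 a * bil GL x a \<ge> 0"
    show "\<forall>r\<in>roots GLM. bil GLM y1 r * bil GLM (emb x) r \<ge> 0"
    proof
      fix r assume r: "r \<in> roots GLM"
      have xP: "x \<in> P" using x unfolding hyp_def by simp
      have "bil GLM y0 r * bil GL x (projL r) \<ge> 0"
      proof (cases "projL r = 0")
        case True thus ?thesis by simp
      next
        case a0: False
        show ?thesis
        proof (cases "projR r = 0")
          case True thus ?thesis using caseB0[OF r True] h by simp
        next
          case False
          have mix: "bil GL (projL r) (projL r) \<ge> 0" "bil GL x0 (projL r) * bil GLM y0 r > 0"
            using caseMix[OF r a0 False] by auto
          have "bil GL x0 (projL r) * bil GL x (projL r) > 0"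
            by (rule L.sign_const[OF nondL xP x0P a0 mix(1)])
          hence "bil GLM y0 r * bil GL x (projL r) > 0" using sign_trans mix(2) by blast
          thus ?thesis by simp
        qed
      qed
      thus "bil GLM y1 r * bil GLM (emb x) r \<ge> 0" unfolding y1r embr using k
        by (simp add: mult.assoc)
    qed
  next
    assume h: "\<forall>r\<in>roots GLM. bil GLM y1 r * bil GLM (emb x) r \<ge> 0"
    show "\<forall>a\<in>roots GL. bil GL x0 a * bil GL x a \<ge> 0"
    proof
      fix a assume a: "a \<in> roots GL"
      define r where "r = join a (0::real^'m)"
      have r: "r \<in> roots GLM" using a unfolding roots_def r_def
        by (auto simp: bilLM int_vec_join int_vec_0)
      have "bil GLM y1 r * bil GLM (emb x) r = k * (bil GL x0 a * bil GL x a)"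
        unfolding y1r embr y0r r_def by simp
      hence "k * (bil GL x0 a * bil GL x a) \<ge> 0" using h r by metis
      thus "bil GL x0 a * bil GL x a \<ge> 0" using k by (simp add: zero_le_mult_iff)
    qed
  qed
  have "emb ` (hyp GL P \<inter> closure DL) = hyp GLM PLM \<inter> closure DLM \<inter> emb ` hyp GL P"
  proof
    show "emb ` (hyp GL P \<inter> closure DL) \<subseteq> hyp GLM PLM \<inter> closure DLM \<inter> emb ` hyp GL P"
    proof
      fix z :: "real^('n+'m)" assume "z \<in> emb ` (hyp GL P \<inter> closure DL)"
      then obtain x where z: "z = emb x" and "x \<in> hyp GL P" "x \<in> closure DL" by blast
      hence x: "x \<in> hyp GL P" and w: "\<forall>r\<in>roots GL. bil GL x0 r * bil GL x r \<ge> 0"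
        using eqL by auto
      have "emb x \<in> hyp GLM PLM \<inter> closure DLM" using eqLM embH[OF x] equiv[OF x] w by auto
      thus "z \<in> hyp GLM PLM \<inter> closure DLM \<inter> emb ` hyp GL P" using x z by auto
    qed
    show "hyp GLM PLM \<inter> closure DLM \<inter> emb ` hyp GL P \<subseteq> emb ` (hyp GL P \<inter> closure DL)"
    proof
      fix z assume z: "z \<in> hyp GLM PLM \<inter> closure DLM \<inter> emb ` hyp GL P"
      then obtain x where x: "x \<in> hyp GL P" and zx: "z = emb x" by blast
      have "z \<in> hyp GLM PLM \<inter> closure DLM" using z by blast
      hence "\<forall>r\<in>roots GLM. bil GLM y1 r * bil GLM z r \<ge> 0" using eqLM by auto
      hence "x \<in> hyp GL P \<inter> closure DL" using eqL equiv[OF x] x zx by auto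
      thus "z \<in> emb ` (hyp GL P \<inter> closure DL)" using zx by blast
    qed
  qed
  thus ?thesis using DLc DLMc unfolding GLM_def by blast
qed


end
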